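(* Let $p$ be a prime and let $A$ be the $p\times p$ matrix over $\mathbb{F}_p$ with rows and columns indexed by $0,1,\dots,p-1$ defined by $A(s,s)=0$ for all $s$, $A(s,0)=1$ for $s=1,\dots,p-1$, and $A(s,t)=(s-t)^{-1}$ for $s\in\{0,\dots,p-1\}$, $t\in\{1,\dots,p-1\}$, $s\neq t$. Then every $2\times 2$ submatrix of $A$ is invertible. *)

theory Defs
  imports "HOL-Analysis.Analysis"
begin

text \<open>The field F_p is modelled by an arbitrary finite field type 'a of prime
  cardinality p (unique up to isomorphism).\<close>

definition matA :: "nat \<Rightarrow> nat \<Rightarrow> 'a::field" where
  "matA s t =
     (if s = t then 0
      else if t = 0 then 1
      else inverse (of_nat s - of_nat t))"

definition sub2 :: "nat \<Rightarrow> nat \<Rightarrow> nat \<Rightarrow> nat \<Rightarrow> 'a::field ^ 2 ^ 2" where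
  "sub2 s1 s2 t1 t2 =
     (\<chi> i j. matA (if i = 1 then s1 else s2) (if j = 1 then t1 else t2))"

end

theory Submission imports Defs "HOL-Number_Theory.Residues" begin
lemma gen:
  fixes a1 a2 b1 b2 :: "'a::field"
  assumes "a1 \<noteq> a2" "b1 \<noteq> b2" "b2 \<noteq> 0" "\<not>(a1=b2 \<and> a2=b1)"
  defines "f \<equiv> \<lambda>x y. if x=y then 0 else if y=0 then 1 else inverse(x-y)"
  shows "f a1 b1 * f a2 b2 - f a1 b2 * f a2 b1 \<noteq> 0"
proof -
  have "(a1 - b2) * (a2 - b1) \<noteq> (a1 - b1) * (a2 - b2)"
  proof
    assume "(a1 - b2) * (a2 - b1) = (a1 - b1) * (a2 - b2)"
    then have "(a1 - a2) * (b2 - b1) = 0" by (simp add: algebra_simps)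
    with assms show False by simp
  qed
  then have ne: "(a1 - b2) * (a2 - b1) - (a1 - b1) * (a2 - b2) \<noteq> 0" by simp
  have key: "inverse x * inverse y - inverse z * inverse w \<noteq> 0"
    if "x \<noteq> 0" "y \<noteq> 0" "z \<noteq> 0" "w \<noteq> 0" "z * w - x * y \<noteq> 0" for x y z w :: 'a
  proof
    assume "inverse x * inverse y - inverse z * inverse w = 0"
    then have "(inverse x * inverse y - inverse z * inverse w) * (x*y*z*w) = 0" by simp
    then have "z * w - x * y = 0" using that(1-4) by (simp add: field_simps)
    with that(5) show False by simp
  qed
  show ?thesis
  proof (cases "a1 = b1 \<or> a2 = b2 \<or> a1 = b2 \<or> a2 = b1 \<or> b1 = 0")
    case True
    then show ?thesis using assms(1-4) unfolding f_def by (auto split: if_splits)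
  next
    case False
    then show ?thesis using assms(1-4) unfolding f_def
      using key[of "a1 - b1" "a2 - b2" "a1 - b2" "a2 - b1"] ne by auto
  qed
qed

lemma inj_char:
  assumes "prime CARD('a::{field,finite})" "s < CARD('a)" "t < CARD('a)"
    "(of_nat s :: 'a) = of_nat t"
  shows "s = t"
proof -
  have "CHAR('a) dvd CARD('a)" by (rule CHAR_dvd_CARD)
  then have c: "CHAR('a) = CARD('a)" using assms(1) CHAR_not_1
    by (metis One_nat_def prime_nat_iff)
  show ?thesis using assms(2-4) unfolding of_nat_eq_iff_cong_CHAR c cong_def by simp
qed

theorem lemma2p7:
  fixes s1 s2 t1 t2 :: nat
  assumes "prime CARD('a::{field,finite})"
    and "s1 < s2" and "s2 < CARD('a)"
    and "t1 < t2" and "t2 < CARD('a)"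
  shows "invertible (sub2 s1 s2 t1 t2 :: 'a ^ 2 ^ 2)"
proof -
  have inj: "\<And>s t. s < CARD('a) \<Longrightarrow> t < CARD('a) \<Longrightarrow> ((of_nat s :: 'a) = of_nat t) = (s = t)"
    using inj_char[OF assms(1)] by blast
  define f where "f \<equiv> \<lambda>x y::'a. if x=y then 0 else if y=0 then 1 else inverse(x-y)"
  have m: "matA s t = f (of_nat s) (of_nat t)" if "s < CARD('a)" "t < CARD('a)" for s t
    using inj[OF that] inj[OF \<open>t < CARD('a)\<close>, of 0] that unfolding matA_def f_def
    by (auto simp: of_nat_eq_iff_cong_CHAR)
  have g: "f (of_nat s1) (of_nat t1) * f (of_nat s2) (of_nat t2) - f (of_nat s1) (of_nat t2) * f (of_nat s2) (of_nat t1) \<noteq> (0::'a)"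
    unfolding f_def
    apply (rule gen)
    using assms inj[of t2 0] inj by auto
  have "det (sub2 s1 s2 t1 t2 :: 'a ^ 2 ^ 2) \<noteq> 0"
    unfolding det_2 sub2_def using g assms by (simp add: m)
  then show ?thesis by (simp add: invertible_det_nz)
qed
end
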